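(* Let $f:X\to\mathcal G$ be a convex function and $x_0\in\operatorname{dom} f$. For $x\in X$ and $t\in[0,1]$ write $x_t=x_0+t(x-x_0)$. Then $f(x_0)=\inf f[X]$ if and only if both of the following hold: (1) $x_0$ solves the strict set-valued Minty inequality, i.e. $f'(x,x_0-x)\supseteq 0^+f(x_0)$ for all $x\in X$ (equivalently $0\in f'(x,x_0-x)$ for all $x\in X$); and (2) for every $x\in X$ the function $t\mapsto f(x_t)$ on $[0,1]$ is lattice lower semicontinuous at $0$, i.e. $f(x_0)\supseteq \bigcap_{t_0\in(0,1)}\operatorname{cl}\operatorname{co}\bigcup_{t\in[0,t_0)}f(x_t)$. Moreover, if $x_0$ solves the strict scalarized Minty inequality, i.e. $\varphi'_{f,z^*}(x,x_0-x)\le 0$ for all $x\in X$ and all $z^*\in C^-\setminus\{0\}$, and for every $x\in X$ and every $z^*\in C^-\setminus\{0\}$ the function $t\mapsto\varphi_{f,z^*}(x_t)$ (for $t\in[0,1]$, and $+\infty$ for $t\notin[0,1]$) is lower semicontinuous at $t=0$, then $f(x_0)=\inf f[X]$.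
   Context: $X$ is a real linear space and $Z$ a real locally convex Hausdorff space with topological dual $Z^*$. $C\subseteq Z$ is a closed convex cone with $0\in C$ such that $C^-=\{z^*\in Z^*: z^*(c)\le 0\ \forall c\in C\}$ satisfies $C^-\setminus\{0\}\ne\emptyset$. Let $\mathcal G=\{A\subseteq Z: A=\operatorname{cl}\operatorname{co}(A+C)\}$ (it contains $\emptyset$ and $Z$). For $A,B\in\mathcal G$: $A\oplus B=\operatorname{cl}\{a+b\}$, $tA=\{ta:a\in A\}$ for $t>0$, and $A\ominus B=\{z\in Z: B+\{z\}\subseteq A\}$ (so $A\ominus\emptyset=Z$). The recession cone is $0^+A=\{z: A+\{z\}\subseteq A\}$ for $A\neq\emptyset$, $0^+\emptyset=\emptyset$. A function $f:X\to\mathcal G$ is convex if $f(tx_1+(1-t)x_2)\supseteq tf(x_1)\oplus(1-t)f(x_2)$ for all $x_1,x_2$, $t\in(0,1)$; $\operatorname{dom} f=\{x: f(x)\neq\emptyset\}$; $\inf f[X]=\operatorname{cl}\operatorname{co}\bigcup_{x}f(x)$. The directional derivative is $f'(x,u)=\bigcap_{t_0>0}\operatorname{cl}\operatorname{co}\bigcup_{0<t<t_0}\frac1t\big(f(x+tu)\ominus f(x)\big)$. On $\overline{\mathbb R}$ use inf-addition $\dot+$ ($+\infty$ dominates: $(-\infty)\dot+(+\infty)=+\infty$) and $r\ominus s=\inf\{t\in\mathbb R: r\le s\dot+t\}$ ($\inf\emptyset=+\infty$). For $z^*\in C^-\setminus\{0\}$, $\varphi_{f,z^*}(x)=\inf\{-z^*(z):z\in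 f(x)\}$ ($+\infty$ if $f(x)=\emptyset$), and $\varphi'_{f,z^*}(x,u)=\inf_{t>0}\frac1t\big(\varphi_{f,z^*}(x+tu)\ominus\varphi_{f,z^*}(x)\big)$. *)

theory Defs
  imports "HOL-Analysis.Analysis" "HOL-Library.Extended_Real"
begin

definition lc_tvs :: "('z::{real_vector, t2_space}) itself \<Rightarrow> bool" where
  "lc_tvs _ \<longleftrightarrow>
     continuous_on UNIV (\<lambda>(a::'z, b::'z). a + b) \<and>
     continuous_on UNIV (\<lambda>(r::real, a::'z). r *\<^sub>R a) \<and>
     (\<forall>U::'z set. open U \<and> 0 \<in> U \<longrightarrow> (\<exists>V. open V \<and> convex V \<and> 0 \<in> V \<and> V \<subseteq> U))"

definition top_dual :: "('z::{real_vector, topological_space} \<Rightarrow> real) set" where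
  "top_dual = {zs. linear zs \<and> continuous_on UNIV zs}"

definition neg_dual_cone :: "'z::{real_vector, topological_space} set \<Rightarrow> ('z \<Rightarrow> real) set" where
  "neg_dual_cone C = {zs \<in> top_dual. \<forall>c\<in>C. zs c \<le> 0}"

definition setplus :: "'z::real_vector set \<Rightarrow> 'z set \<Rightarrow> 'z set" where
  "setplus A B = {a + b | a b. a \<in> A \<and> b \<in> B}"

definition inG :: "'z::{real_vector, topological_space} set \<Rightarrow> 'z set \<Rightarrow> bool" where
  "inG C A \<longleftrightarrow> A = closure (convex hull (setplus A C))"

definition oplusG :: "'z::{real_vector, topological_space} set \<Rightarrow> 'z set \<Rightarrow> 'z set" where
  "oplusG A B = closure (setplus A B)"

definition scaleG :: "real \<Rightarrow> 'z::real_vector set \<Rightarrow> 'z set" where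
  "scaleG t A = (\<lambda>a. t *\<^sub>R a) ` A"

definition ominusG :: "'z::real_vector set \<Rightarrow> 'z set \<Rightarrow> 'z set" where
  "ominusG A B = {z. setplus B {z} \<subseteq> A}"

definition recc :: "'z::real_vector set \<Rightarrow> 'z set" where
  "recc A = (if A = {} then {} else {z. setplus A {z} \<subseteq> A})"

definition convex_G_fun :: "('x::real_vector \<Rightarrow> 'z::{real_vector, topological_space} set) \<Rightarrow> bool" where
  "convex_G_fun f \<longleftrightarrow> (\<forall>x1 x2 t. 0 < t \<and> t < 1 \<longrightarrow>
      oplusG (scaleG t (f x1)) (scaleG (1 - t) (f x2)) \<subseteq> f (t *\<^sub>R x1 + (1 - t) *\<^sub>R x2))"

definition dom_G :: "('x \<Rightarrow> 'z set) \<Rightarrow> 'x set" where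
  "dom_G f = {x. f x \<noteq> {}}"

definition inf_G :: "('x \<Rightarrow> 'z::{real_vector, topological_space} set) \<Rightarrow> 'z set" where
  "inf_G f = closure (convex hull (\<Union>x. f x))"

definition dderiv_G :: "('x::real_vector \<Rightarrow> 'z::{real_vector, topological_space} set) \<Rightarrow> 'x \<Rightarrow> 'x \<Rightarrow> 'z set" where
  "dderiv_G f x u = (\<Inter>t0\<in>{0<..}. closure (convex hull
      (\<Union>t\<in>{0<..<t0}. scaleG (1 / t) (ominusG (f (x + t *\<^sub>R u)) (f x)))))"

definition iplus :: "ereal \<Rightarrow> ereal \<Rightarrow> ereal" where
  "iplus r s = (if r = \<infinity> \<or> s = \<infinity> then \<infinity> else r + s)"

definition iminus :: "ereal \<Rightarrow> ereal \<Rightarrow> ereal" where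
  "iminus r s = Inf {ereal t | t. r \<le> iplus s (ereal t)}"

definition scal :: "('x \<Rightarrow> 'z set) \<Rightarrow> ('z \<Rightarrow> real) \<Rightarrow> 'x \<Rightarrow> ereal" where
  "scal f zs x = Inf ((\<lambda>z. ereal (- zs z)) ` f x)"

definition scal_dderiv :: "('x::real_vector \<Rightarrow> 'z set) \<Rightarrow> ('z \<Rightarrow> real) \<Rightarrow> 'x \<Rightarrow> 'x \<Rightarrow> ereal" where
  "scal_dderiv f zs x u = Inf {ereal (1 / t) * iminus (scal f zs (x + t *\<^sub>R u)) (scal f zs x) | t. 0 < t}"

end

theory Submission
  imports Defs
begin


lemma HB_ext_step:
  fixes p :: "'z::real_vector \<Rightarrow> real" and M :: "('z \<times> real) set"
  assumes sub: "\<And>x y. p (x + y) \<le> p x + p y"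
    and hom: "\<And>c x. c > 0 \<Longrightarrow> p (c *\<^sub>R x) = c * p x"
    and M: "subspace M" and dom: "\<And>x a. (x, a) \<in> M \<Longrightarrow> a \<le> p x"
  shows "\<exists>c. \<forall>x a t. (x, a) \<in> M \<longrightarrow> a + t * c \<le> p (x + t *\<^sub>R y)"
proof -
  have M0: "(0,0) \<in> M" using M by (simp add: subspace_def zero_prod_def)
  have Madd: "(x1 + x2, a1 + a2) \<in> M" if "(x1,a1) \<in> M" "(x2,a2) \<in> M" for x1 x2 a1 a2
    using M that unfolding subspace_def by (metis add_Pair)
  have Msc: "(c *\<^sub>R x, c * a) \<in> M" if "(x,a) \<in> M" for x a c
    using M that unfolding subspace_def by (metis scaleR_Pair real_scaleR_def)
  have key: "a1 - p (x1 - y) \<le> p (x2 + y) - a2" if "(x1,a1) \<in> M" "(x2,a2) \<in> M" for x1 x2 a1 a2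
  proof -
    have "a1 + a2 \<le> p (x1 + x2)" using dom Madd that by blast
    also have "p (x1 + x2) \<le> p (x1 - y) + p (x2 + y)"
      using sub[of "x1 - y" "x2 + y"] by (simp add: algebra_simps)
    finally show ?thesis by simp
  qed
  define S where "S = {a - p (x - y) | x a. (x, a) \<in> M}"
  have Sne: "S \<noteq> {}" using M0 unfolding S_def by blast
  have Sbdd: "bdd_above S" unfolding S_def bdd_above_def
    using key[OF _ M0] by auto
  define c where "c = Sup S"
  have c_up: "a - p (x - y) \<le> c" if "(x,a) \<in> M" for x a
    unfolding c_def by (rule cSup_upper[OF _ Sbdd]) (use that S_def in blast)
  have c_lo: "c \<le> p (x + y) - a" if "(x,a) \<in> M" for x a
    unfolding c_def by (rule cSup_least[OF Sne]) (use key that S_def in auto)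
  show ?thesis
  proof (intro exI allI impI)
    fix x a and t :: real assume xa: "(x,a) \<in> M"
    consider "t > 0" | "t = 0" | "t < 0" by linarith
    then show "a + t * c \<le> p (x + t *\<^sub>R y)"
    proof cases
      case 1
      have "(inverse t *\<^sub>R x, inverse t * a) \<in> M" using Msc[OF xa] .
      from c_lo[OF this] have "c \<le> p (inverse t *\<^sub>R x + y) - inverse t * a" .
      hence "t * c \<le> t * (p (inverse t *\<^sub>R x + y) - inverse t * a)"
        by (rule mult_left_mono) (use 1 in simp)
      also have "\<dots> = t * p (inverse t *\<^sub>R x + y) - a" using 1 by (simp add: right_diff_distrib)
      finally have "t * c \<le> t * p (inverse t *\<^sub>R x + y) - a" .
      moreover have "t *\<^sub>R (inverse t *\<^sub>R x + y) = x + t *\<^sub>R y" using 1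
        by (simp add: scaleR_add_right)
      ultimately show ?thesis using hom[OF 1, of "inverse t *\<^sub>R x + y"] by simp
    next
      case 2 thus ?thesis using dom[OF xa] by simp
    next
      case 3
      define u where "u = - t"
      have u: "u > 0" using 3 u_def by simp
      have "(inverse u *\<^sub>R x, inverse u * a) \<in> M" using Msc[OF xa] .
      from c_up[OF this] have "inverse u * a - p (inverse u *\<^sub>R x - y) \<le> c" .
      hence "u * (inverse u * a - p (inverse u *\<^sub>R x - y)) \<le> u * c"
        by (rule mult_left_mono) (use u in simp)
      hence "a - u * p (inverse u *\<^sub>R x - y) \<le> u * c" using u by (simp add: right_diff_distrib mult.assoc[symmetric])
      moreover have "u *\<^sub>R (inverse u *\<^sub>R x - y) = x + t *\<^sub>R y" using u
        by (simp add: scaleR_diff_right u_def)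
      ultimately show ?thesis using hom[OF u, of "inverse u *\<^sub>R x - y"] by (simp add: u_def)
    qed
  qed
qed

lemma hahn_banach:
  fixes p :: "'z::real_vector \<Rightarrow> real"
  assumes sub: "\<And>x y. p (x + y) \<le> p x + p y"
    and hom: "\<And>c x. c > 0 \<Longrightarrow> p (c *\<^sub>R x) = c * p x"
  shows "\<exists>l. linear l \<and> (\<forall>x. l x \<le> p x) \<and> l e = p e"
proof -
  have p0: "p 0 = 0" using hom[of 2 0] by simp
  have pe: "0 \<le> p e + p (- e)" using sub[of e "-e"] p0 by simp
  have homt: "t * p e \<le> p (t *\<^sub>R e)" for t
  proof (cases "t > 0")
    case True thus ?thesis using hom by simp
  next
    case False
    show ?thesis
    proof (cases "t = 0")
      case True thus ?thesis using p0 by simp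
    next
      case False
      hence t: "- t > 0" using \<open>\<not> t > 0\<close> by simp
      have "p (t *\<^sub>R e) = p ((- t) *\<^sub>R (- e))" by simp
      also have "\<dots> = (- t) * p (- e)" using hom[OF t] .
      finally have "p (t *\<^sub>R e) = (- t) * p (- e)" .
      moreover have "t * (p e + p (- e)) \<le> 0"
        using mult_nonpos_nonneg[of t "p e + p (-e)"] pe t by simp
      ultimately show ?thesis by (simp add: distrib_left)
    qed
  qed
  define F where "F = {G :: ('z \<times> real) set. subspace G \<and> (e, p e) \<in> G \<and> (\<forall>x a. (x,a) \<in> G \<longrightarrow> a \<le> p x)}"
  define G0 where "G0 = {(t *\<^sub>R e, t * p e) | t. True}"
  have G0F: "G0 \<in> F"
  proof -
    have "subspace G0" unfolding subspace_def G0_def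
    proof (intro conjI ballI allI)
      show "0 \<in> {(t *\<^sub>R e, t * p e) |t. True}" by (rule CollectI, rule exI[of _ 0]) (simp add: zero_prod_def)
    next
      fix x y assume "x \<in> {(t *\<^sub>R e, t * p e) |t. True}" "y \<in> {(t *\<^sub>R e, t * p e) |t. True}"
      then obtain s t where "x = (s *\<^sub>R e, s * p e)" "y = (t *\<^sub>R e, t * p e)" by blast
      thus "x + y \<in> {(t *\<^sub>R e, t * p e) |t. True}"
        by (intro CollectI exI[of _ "s + t"]) (simp add: algebra_simps scaleR_add_left)
    next
      fix c x assume "x \<in> {(t *\<^sub>R e, t * p e) |t. True}"
      then obtain s where "x = (s *\<^sub>R e, s * p e)" by blast
      thus "c *\<^sub>R x \<in> {(t *\<^sub>R e, t * p e) |t. True}"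
        by (intro CollectI exI[of _ "c * s"]) simp
    qed
    moreover have "(e, p e) \<in> G0" unfolding G0_def by (intro CollectI exI[of _ 1]) simp
    moreover have "\<forall>x a. (x,a) \<in> G0 \<longrightarrow> a \<le> p x" unfolding G0_def using homt by auto
    ultimately show ?thesis unfolding F_def by blast
  qed
  have "\<exists>M\<in>F. \<forall>X\<in>F. M \<subseteq> X \<longrightarrow> X = M"
  proof (rule Zorn_Lemma2, intro ballI)
    fix Ch assume Ch: "Ch \<in> chains F"
    show "\<exists>U\<in>F. \<forall>X\<in>Ch. X \<subseteq> U"
    proof (cases "Ch = {}")
      case True thus ?thesis using G0F by blast
    next
      case False
      have ChF: "Ch \<subseteq> F" and chain: "chain\<^sub>\<subseteq> Ch" using Ch unfolding chains_def by auto
      have "\<Union>Ch \<in> F"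
      proof -
        have "subspace (\<Union>Ch)" unfolding subspace_def
        proof (intro conjI ballI allI)
          obtain X where "X \<in> Ch" using False by blast
          thus "0 \<in> \<Union>Ch" using ChF unfolding F_def subspace_def by blast
        next
          fix x y assume "x \<in> \<Union>Ch" "y \<in> \<Union>Ch"
          then obtain X Y where XY: "X \<in> Ch" "Y \<in> Ch" "x \<in> X" "y \<in> Y" by blast
          from chain XY have "X \<subseteq> Y \<or> Y \<subseteq> X" unfolding chain_subset_def by blast
          thus "x + y \<in> \<Union>Ch"
          proof
            assume "X \<subseteq> Y"
            hence "x + y \<in> Y" using XY ChF unfolding F_def subspace_def by blast
            thus ?thesis using XY by blast
          next
            assume "Y \<subseteq> X"
            hence "x + y \<in> X" using XY ChF unfolding F_def subspace_def by blast
            thus ?thesis using XY by blast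
          qed
        next
          fix c x assume "x \<in> \<Union>Ch"
          then obtain X where "X \<in> Ch" "x \<in> X" by blast
          thus "c *\<^sub>R x \<in> \<Union>Ch" using ChF unfolding F_def subspace_def by blast
        qed
        moreover have "(e, p e) \<in> \<Union>Ch" using False ChF unfolding F_def by blast
        moreover have "\<forall>x a. (x,a) \<in> \<Union>Ch \<longrightarrow> a \<le> p x" using ChF unfolding F_def by blast
        ultimately show ?thesis unfolding F_def by blast
      qed
      thus ?thesis by blast
    qed
  qed
  then obtain M where MF: "M \<in> F" and Mmax: "\<And>X. X \<in> F \<Longrightarrow> M \<subseteq> X \<Longrightarrow> X = M" by blast
  have Msub: "subspace M" and Me: "(e, p e) \<in> M" and Mdom: "\<And>x a. (x,a) \<in> M \<Longrightarrow> a \<le> p x"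
    using MF unfolding F_def by auto
  have Madd: "(x1 + x2, a1 + a2) \<in> M" if "(x1,a1) \<in> M" "(x2,a2) \<in> M" for x1 x2 a1 a2
    using Msub that unfolding subspace_def by (metis add_Pair)
  have Msc: "(c *\<^sub>R x, c * a) \<in> M" if "(x,a) \<in> M" for x a c
    using Msub that unfolding subspace_def by (metis scaleR_Pair real_scaleR_def)
  have Mfun: "a = b" if "(x,a) \<in> M" "(x,b) \<in> M" for x a b
  proof -
    have "(x + (-1) *\<^sub>R x, a + (-1) * b) \<in> M" using Madd[OF that(1) Msc[OF that(2)]] .
    hence "a - b \<le> 0" using Mdom[of 0 "a - b"] p0 by simp
    moreover have "(x + (-1) *\<^sub>R x, b + (-1) * a) \<in> M" using Madd[OF that(2) Msc[OF that(1)]] .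
    hence "b - a \<le> 0" using Mdom[of 0 "b - a"] p0 by simp
    ultimately show ?thesis by simp
  qed
  have Mtot: "\<exists>a. (y, a) \<in> M" for y
  proof (rule ccontr)
    assume ny: "\<nexists>a. (y, a) \<in> M"
    obtain c where c: "\<And>x a t. (x, a) \<in> M \<Longrightarrow> a + t * c \<le> p (x + t *\<^sub>R y)"
      using HB_ext_step[OF sub hom Msub Mdom, of y] by blast
    define M' where "M' = {(x + t *\<^sub>R y, a + t * c) | x a t. (x,a) \<in> M}"
    have M0: "(0,0) \<in> M" using Msub by (simp add: subspace_def zero_prod_def)
    have "M' \<in> F"
    proof -
      have "subspace M'" unfolding subspace_def
      proof (intro conjI ballI allI)
        show "0 \<in> M'" unfolding M'_def zero_prod_def
          by (rule CollectI, intro exI[of _ 0] exI[of _ "0::real"]) (use M0 in simp)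
      next
        fix u v assume "u \<in> M'" "v \<in> M'"
        then obtain x1 a1 t1 x2 a2 t2 where
          u: "u = (x1 + t1 *\<^sub>R y, a1 + t1 * c)" "(x1,a1) \<in> M" and
          v: "v = (x2 + t2 *\<^sub>R y, a2 + t2 * c)" "(x2,a2) \<in> M" unfolding M'_def by blast
        have "u + v = ((x1 + x2) + (t1 + t2) *\<^sub>R y, (a1 + a2) + (t1 + t2) * c)"
          using u v by (simp add: algebra_simps scaleR_add_left)
        thus "u + v \<in> M'" unfolding M'_def using Madd[OF u(2) v(2)] by blast
      next
        fix r u assume "u \<in> M'"
        then obtain x1 a1 t1 where
          u: "u = (x1 + t1 *\<^sub>R y, a1 + t1 * c)" "(x1,a1) \<in> M" unfolding M'_def by blast
        have "r *\<^sub>R u = (r *\<^sub>R x1 + (r * t1) *\<^sub>R y, r * a1 + (r * t1) * c)"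
          using u by (simp add: algebra_simps scaleR_add_right)
        thus "r *\<^sub>R u \<in> M'" unfolding M'_def using Msc[OF u(2)] by blast
      qed
      moreover have "(e, p e) \<in> M'" unfolding M'_def
        by (rule CollectI, intro exI[of _ e] exI[of _ "p e"] exI[of _ "0::real"]) (use Me in simp)
      moreover have "\<forall>x a. (x,a) \<in> M' \<longrightarrow> a \<le> p x" unfolding M'_def using c by blast
      ultimately show ?thesis unfolding F_def by blast
    qed
    moreover have "M \<subseteq> M'"
    proof
      fix u assume "u \<in> M"
      then obtain x a where "u = (x,a)" "(x,a) \<in> M" by (cases u) auto
      thus "u \<in> M'" unfolding M'_def
        by (intro CollectI exI[of _ x] exI[of _ a] exI[of _ "0::real"]) simp
    qed
    moreover have "(y, c) \<in> M'" unfolding M'_def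
      by (rule CollectI, intro exI[of _ 0] exI[of _ "0::real"] exI[of _ "1::real"]) (use M0 in simp)
    ultimately show False using Mmax ny by blast
  qed
  define l where "l x = (THE a. (x,a) \<in> M)" for x
  have lM: "(x, l x) \<in> M" for x
    unfolding l_def using Mtot[of x] Mfun by (metis theI)
  have leq: "l x = a" if "(x,a) \<in> M" for x a using Mfun[OF lM that] .
  have "linear l"
  proof (rule linearI)
    fix x y show "l (x + y) = l x + l y" using leq[OF Madd[OF lM lM]] .
  next
    fix r x show "l (r *\<^sub>R x) = r *\<^sub>R l x" using leq[OF Msc[OF lM]] by simp
  qed
  moreover have "\<forall>x. l x \<le> p x" using Mdom lM by blast
  moreover have "l e = p e" using leq[OF Me] .
  ultimately show ?thesis by blast
qed




context
  fixes dummy :: "'z::{real_vector, t2_space} itself"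
  assumes lc: "lc_tvs TYPE('z)"
begin

lemma cont_add:
  fixes f g :: "'a::topological_space \<Rightarrow> 'z"
  assumes "continuous_on UNIV f" "continuous_on UNIV g"
  shows "continuous_on UNIV (\<lambda>x. f x + g x)"
proof -
  have A: "continuous_on UNIV (\<lambda>(a::'z, b::'z). a + b)" using lc unfolding lc_tvs_def by blast
  have "continuous_on UNIV (\<lambda>x. (\<lambda>(a::'z, b::'z). a + b) (f x, g x))"
    by (rule continuous_on_compose2[OF A continuous_on_Pair[OF assms]]) auto
  thus ?thesis by simp
qed

lemma cont_scale:
  fixes f :: "'a::topological_space \<Rightarrow> real" and g :: "'a \<Rightarrow> 'z"
  assumes "continuous_on UNIV f" "continuous_on UNIV g"
  shows "continuous_on UNIV (\<lambda>x. f x *\<^sub>R g x)"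
proof -
  have A: "continuous_on UNIV (\<lambda>(r::real, a::'z). r *\<^sub>R a)" using lc unfolding lc_tvs_def by blast
  have "continuous_on UNIV (\<lambda>x. (\<lambda>(r::real, a::'z). r *\<^sub>R a) (f x, g x))"
    by (rule continuous_on_compose2[OF A continuous_on_Pair[OF assms]]) auto
  thus ?thesis by simp
qed

lemma cont_affine: "continuous_on UNIV (\<lambda>y::'z. c *\<^sub>R (y + d))"
  by (intro cont_scale cont_add continuous_on_const continuous_on_id)

lemma open_affine_vimage: "open K \<Longrightarrow> open {y::'z. c *\<^sub>R (y + d) \<in> K}"
  using open_vimage[OF _ cont_affine, of K c d] by (simp add: vimage_def)

lemma open_ray_vimage: "open (K::'z set) \<Longrightarrow> open {r::real. r *\<^sub>R z \<in> K}"
proof -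
  assume K: "open K"
  have "continuous_on UNIV (\<lambda>r::real. r *\<^sub>R z)"
    by (intro cont_scale continuous_on_const continuous_on_id)
  from open_vimage[OF K this] show ?thesis by (simp add: vimage_def)
qed

lemma convex_closure_lc:
  assumes "convex (S::'z set)" shows "convex (closure S)"
  unfolding convex_def
proof (intro ballI allI impI)
  fix x y and u v :: real assume xy: "x \<in> closure S" "y \<in> closure S" and uv: "0 \<le> u" "0 \<le> v" "u + v = 1"
  define F where "F = (\<lambda>q::'z \<times> 'z. u *\<^sub>R fst q + v *\<^sub>R snd q)"
  have cF: "continuous_on UNIV F" unfolding F_def
    by (intro cont_add cont_scale continuous_on_const continuous_on_fst continuous_on_snd continuous_on_id)
  have "F ` closure (S \<times> S) \<subseteq> closure S"
  proof (rule image_closure_subset)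
    show "continuous_on (closure (S \<times> S)) F" using cF continuous_on_subset by blast
    show "F ` (S \<times> S) \<subseteq> closure S"
    proof
      fix w assume "w \<in> F ` (S \<times> S)"
      then obtain a b where ab: "a \<in> S" "b \<in> S" "w = u *\<^sub>R a + v *\<^sub>R b" unfolding F_def by auto
      hence "w \<in> S" using assms uv unfolding convex_def by blast
      thus "w \<in> closure S" using closure_subset by blast
    qed
  qed auto
  moreover have "(x,y) \<in> closure (S \<times> S)" using xy by (simp add: closure_Times)
  ultimately have "F (x,y) \<in> closure S" by blast
  thus "u *\<^sub>R x + v *\<^sub>R y \<in> closure S" unfolding F_def by simp
qed

end




definition mink :: "'z::real_vector set \<Rightarrow> 'z \<Rightarrow> real" where
  "mink K z = Inf {t. 0 < t \<and> inverse t *\<^sub>R z \<in> K}"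

lemma mink_up:
  assumes K: "convex K" "0 \<in> K" and t: "0 < t" "inverse t *\<^sub>R z \<in> K" and tt: "t \<le> t'"
  shows "inverse t' *\<^sub>R z \<in> K"
proof -
  have t': "0 < t'" using t tt by simp
  have "(t / t') *\<^sub>R (inverse t *\<^sub>R z) + (1 - t / t') *\<^sub>R 0 \<in> K"
    by (rule convexD[OF K(1) t(2) K(2)]) (use t t' tt in auto)
  moreover have c1: "(t / t') * inverse t = inverse t'" using t t' by (simp add: field_simps)
  have "(t / t') *\<^sub>R (inverse t *\<^sub>R z) = inverse t' *\<^sub>R z"
    by (simp only: scaleR_scaleR c1)
  ultimately show ?thesis by (metis scaleR_zero_right add_0_right)
qed

lemma mink_bdd: "bdd_below {t. 0 < t \<and> inverse t *\<^sub>R z \<in> K}"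
  by (rule bdd_belowI[of _ 0]) auto

lemma mink_le: "0 < t \<Longrightarrow> inverse t *\<^sub>R z \<in> K \<Longrightarrow> mink K z \<le> t"
  unfolding mink_def by (rule cInf_lower[OF _ mink_bdd]) auto

context
  fixes dummy :: "'z::{real_vector, t2_space} itself"
  assumes lc: "lc_tvs TYPE('z)"
begin

lemma mink_ne:
  assumes "open (K::'z set)" "0 \<in> K"
  shows "\<exists>t>0. inverse t *\<^sub>R z \<in> K"
proof -
  have "open {r::real. r *\<^sub>R z \<in> K}" using open_ray_vimage[OF lc assms(1)] .
  moreover have "0 \<in> {r::real. r *\<^sub>R z \<in> K}" using assms by simp
  ultimately obtain e where e: "e > 0" "ball 0 e \<subseteq> {r::real. r *\<^sub>R z \<in> K}"
    using open_contains_ball_eq by blast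
  moreover have "e / 2 \<in> ball (0::real) e" using e by simp
  ultimately have "e / 2 \<in> {r::real. r *\<^sub>R z \<in> K}" by blast
  thus ?thesis using e by (intro exI[of _ "inverse (e/2)"]) auto
qed

lemma mink_ne_set:
  assumes "open (K::'z set)" "0 \<in> K"
  shows "{t. 0 < t \<and> inverse t *\<^sub>R z \<in> K} \<noteq> {}"
  using mink_ne[OF assms] by auto

lemma mink_lt:
  assumes "open (K::'z set)" "convex K" "0 \<in> K" "mink K z < s"
  shows "inverse s *\<^sub>R z \<in> K"
proof -
  obtain t where t: "0 < t" "inverse t *\<^sub>R z \<in> K" "t < s"
    using assms(4) unfolding mink_def cInf_less_iff[OF mink_ne_set[OF assms(1,3)] mink_bdd] by auto
  show ?thesis using mink_up[OF assms(2,3) t(1,2)] t(3) by simp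
qed

lemma mink_sub:
  assumes "open (K::'z set)" "convex K" "0 \<in> K"
  shows "mink K (x + y) \<le> mink K x + mink K y"
proof (rule field_le_epsilon)
  fix e :: real assume e: "0 < e"
  have nn: "0 \<le> mink K w" for w unfolding mink_def
    by (rule cInf_greatest[OF mink_ne_set[OF assms(1,3)]]) auto
  define s where "s = mink K x + e/2"
  define t where "t = mink K y + e/2"
  have s: "0 < s" and t: "0 < t" using nn e s_def t_def by (smt (verit) half_gt_zero)+
  have sx: "inverse s *\<^sub>R x \<in> K" using mink_lt[OF assms] s_def e by simp
  have ty: "inverse t *\<^sub>R y \<in> K" using mink_lt[OF assms] t_def e by simp
  have mem: "(s / (s + t)) *\<^sub>R (inverse s *\<^sub>R x) + (t / (s + t)) *\<^sub>R (inverse t *\<^sub>R y) \<in> K"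
    by (rule convexD[OF assms(2) sx ty]) (use s t in \<open>auto simp: divide_simps\<close>)
  have c1: "(s / (s + t)) * inverse s = inverse (s + t)" using s t by (simp add: field_simps)
  have c2: "(t / (s + t)) * inverse t = inverse (s + t)" using s t by (simp add: field_simps)
  have "(s / (s + t)) *\<^sub>R (inverse s *\<^sub>R x) + (t / (s + t)) *\<^sub>R (inverse t *\<^sub>R y)
      = inverse (s + t) *\<^sub>R x + inverse (s + t) *\<^sub>R y" by (simp only: scaleR_scaleR c1 c2)
  also have "\<dots> = inverse (s + t) *\<^sub>R (x + y)" by (simp add: scaleR_add_right)
  finally have "inverse (s + t) *\<^sub>R (x + y) \<in> K" using mem by metis
  hence "mink K (x + y) \<le> s + t" using s t by (intro mink_le) auto
  thus "mink K (x + y) \<le> mink K x + mink K y + e" unfolding s_def t_def by simp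
qed

lemma mink_hom_le:
  assumes "open (K::'z set)" "convex K" "0 \<in> K" "0 < c"
  shows "mink K (c *\<^sub>R z) \<le> c * mink K z"
proof -
  have "mink K (c *\<^sub>R z) \<le> c * mink K z + e" if e: "0 < e" for e
  proof -
    have nn: "0 \<le> mink K w" for w unfolding mink_def
      by (rule cInf_greatest[OF mink_ne_set[OF assms(1,3)]]) auto
    define s where "s = mink K z + e / c"
    have s: "0 < s" using nn[of z] e assms(4) s_def by (smt (verit) divide_pos_pos)
    have mem: "inverse s *\<^sub>R z \<in> K" using mink_lt[OF assms(1-3)] s_def e assms(4) by simp
    have c1: "inverse (c * s) * c = inverse s" using assms(4) s by (simp add: field_simps)
    have "inverse (c * s) *\<^sub>R (c *\<^sub>R z) = inverse s *\<^sub>R z" by (simp only: scaleR_scaleR c1)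
    hence "inverse (c * s) *\<^sub>R (c *\<^sub>R z) \<in> K" using mem by metis
    hence "mink K (c *\<^sub>R z) \<le> c * s" using s assms(4) by (intro mink_le) auto
    thus ?thesis unfolding s_def using assms(4) by (simp add: distrib_left)
  qed
  thus ?thesis by (rule field_le_epsilon)
qed

lemma mink_hom:
  assumes "open (K::'z set)" "convex K" "0 \<in> K" "0 < c"
  shows "mink K (c *\<^sub>R z) = c * mink K z"
proof (rule antisym)
  show "mink K (c *\<^sub>R z) \<le> c * mink K z" by (rule mink_hom_le[OF assms])
  have "mink K z = mink K (inverse c *\<^sub>R (c *\<^sub>R z))" using assms(4) by simp
  also have "\<dots> \<le> inverse c * mink K (c *\<^sub>R z)" using assms by (intro mink_hom_le) auto
  finally show "c * mink K z \<le> mink K (c *\<^sub>R z)" using assms(4)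
    by (simp add: field_simps)
qed

lemma mink_in:
  assumes "open (K::'z set)" "0 \<in> K" "z \<in> K"
  shows "mink K z < 1"
proof -
  have "open {r::real. r *\<^sub>R z \<in> K}" using open_ray_vimage[OF lc assms(1)] .
  moreover have "1 \<in> {r::real. r *\<^sub>R z \<in> K}" using assms by simp
  ultimately obtain e where e: "e > 0" "ball 1 e \<subseteq> {r::real. r *\<^sub>R z \<in> K}"
    using open_contains_ball_eq by blast
  moreover have "1 + e / 2 \<in> ball (1::real) e" using e by (simp add: dist_real_def)
  ultimately have "1 + e / 2 \<in> {r::real. r *\<^sub>R z \<in> K}" by blast
  hence "mink K z \<le> inverse (1 + e/2)" using e by (intro mink_le) auto
  also have "\<dots> < 1" using e by (simp add: field_simps)
  finally show ?thesis .
qed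

lemma mink_notin:
  assumes "open (K::'z set)" "convex K" "0 \<in> K" "z \<notin> K"
  shows "1 \<le> mink K z"
  using mink_lt[OF assms(1-3), of z 1] assms(4) by force

lemma separation:
  fixes A :: "'z set"
  assumes A: "closed A" "convex A" "a0 \<in> A" and b: "b \<notin> A"
  shows "\<exists>l::'z \<Rightarrow> real. linear l \<and> continuous_on UNIV l \<and> (\<exists>d>0. \<forall>a\<in>A. l a + d \<le> l b)"
proof -
  define U where "U = {u. 1 *\<^sub>R (u + b) \<in> - A}"
  have "open U" unfolding U_def using A(1) by (intro open_affine_vimage[OF lc]) auto
  moreover have "0 \<in> U" using b unfolding U_def by simp
  ultimately obtain V where V: "open V" "convex V" "0 \<in> V" "V \<subseteq> U"
    using lc unfolding lc_tvs_def by meson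
  define W where "W = {w. 1 *\<^sub>R (w + 0) \<in> V} \<inter> {w. (-1) *\<^sub>R (w + 0) \<in> V}"
  have Wo: "open W" unfolding W_def using V(1) by (intro open_Int open_affine_vimage[OF lc])
  have W0: "0 \<in> W" using V(3) unfolding W_def by simp
  have Wc: "convex W" unfolding W_def convex_def
  proof (intro ballI allI impI)
    fix x y and u v :: real
    assume "x \<in> {w. 1 *\<^sub>R (w + 0) \<in> V} \<inter> {w. (- 1) *\<^sub>R (w + 0) \<in> V}"
       "y \<in> {w. 1 *\<^sub>R (w + 0) \<in> V} \<inter> {w. (- 1) *\<^sub>R (w + 0) \<in> V}" "0 \<le> u" "0 \<le> v" "u + v = 1"
    hence "x \<in> V" "-x \<in> V" "y \<in> V" "-y \<in> V" "0 \<le> u" "0 \<le> v" "u + v = 1" by auto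
    hence "u *\<^sub>R x + v *\<^sub>R y \<in> V" "u *\<^sub>R (-x) + v *\<^sub>R (-y) \<in> V" using V(2) unfolding convex_def by blast+
    thus "u *\<^sub>R x + v *\<^sub>R y \<in> {w. 1 *\<^sub>R (w + 0) \<in> V} \<inter> {w. (- 1) *\<^sub>R (w + 0) \<in> V}"
      by (simp add: scaleR_right_diff_distrib)
  qed
  have WU: "w \<in> W \<Longrightarrow> b - w \<notin> A" for w
    using V(4) unfolding W_def U_def by (auto simp: algebra_simps)
  define K where "K = {a - a0 + w | a w. a \<in> A \<and> w \<in> W}"
  have KU: "K = (\<Union>a\<in>A. {y. 1 *\<^sub>R (y + (a0 - a)) \<in> W})"
    unfolding K_def by (auto simp: algebra_simps) (metis add_diff_cancel_left' diff_add_cancel)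
  have Ko: "open K" unfolding KU by (intro open_UN ballI open_affine_vimage[OF lc] Wo)
  have K0: "0 \<in> K" unfolding K_def using A(3) W0 by force
  have Kc: "convex K" unfolding convex_def
  proof (intro ballI allI impI)
    fix x y and u v :: real assume "x \<in> K" "y \<in> K" and uv: "0 \<le> u" "0 \<le> v" "u + v = 1"
    then obtain a1 w1 a2 w2 where x: "x = a1 - a0 + w1" "a1 \<in> A" "w1 \<in> W"
      and y: "y = a2 - a0 + w2" "a2 \<in> A" "w2 \<in> W" unfolding K_def by blast
    have "u *\<^sub>R a1 + v *\<^sub>R a2 \<in> A" using A(2) x y uv unfolding convex_def by blast
    moreover have "u *\<^sub>R w1 + v *\<^sub>R w2 \<in> W" using Wc x y uv unfolding convex_def by blast
    moreover have "u *\<^sub>R x + v *\<^sub>R y = (u *\<^sub>R a1 + v *\<^sub>R a2) - a0 + (u *\<^sub>R w1 + v *\<^sub>R w2)"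
    proof -
      have "u *\<^sub>R x + v *\<^sub>R y = (u *\<^sub>R a1 + v *\<^sub>R a2) - (u + v) *\<^sub>R a0 + (u *\<^sub>R w1 + v *\<^sub>R w2)"
        unfolding x y by (simp add: algebra_simps)
      thus ?thesis using uv by simp
    qed
    ultimately show "u *\<^sub>R x + v *\<^sub>R y \<in> K" unfolding K_def by blast
  qed
  define e where "e = b - a0"
  have eK: "e \<notin> K"
  proof
    assume "e \<in> K"
    then obtain a w where "e = a - a0 + w" "a \<in> A" "w \<in> W" unfolding K_def by blast
    hence "b - w = a" unfolding e_def by (simp add: algebra_simps)
    thus False using WU \<open>a \<in> A\<close> \<open>w \<in> W\<close> by blast
  qed
  define p where "p = mink K"
  obtain l where l: "linear l" "\<And>x. l x \<le> p x" "l e = p e"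
    using hahn_banach[of p e] mink_sub[OF Ko Kc K0] mink_hom[OF Ko Kc K0] unfolding p_def by blast
  have le: "1 \<le> l e" using l(3) mink_notin[OF Ko Kc K0 eK] unfolding p_def by simp
  have lK: "k \<in> K \<Longrightarrow> l k < 1" for k using l(2)[of k] mink_in[OF Ko K0, of k] unfolding p_def by simp
  have cont: "continuous_on UNIV l"
    unfolding continuous_on_open_vimage[OF open_UNIV]
  proof (intro allI impI)
    fix B :: "real set" assume B: "open B"
    show "open (l -` B \<inter> UNIV)" unfolding open_subopen[of "l -` B \<inter> UNIV"]
    proof (intro ballI)
      fix z assume "z \<in> l -` B \<inter> UNIV"
      hence "l z \<in> B" by simp
      then obtain eps where eps: "eps > 0" "ball (l z) eps \<subseteq> B" using B open_contains_ball_eq by blast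
      define T where "T = {y. (2/eps) *\<^sub>R (y + - z) \<in> K} \<inter> {y. (-(2/eps)) *\<^sub>R (y + - z) \<in> K}"
      have "open T" unfolding T_def by (intro open_Int open_affine_vimage[OF lc] Ko)
      moreover have "z \<in> T" unfolding T_def using K0 by simp
      moreover have "T \<subseteq> l -` B \<inter> UNIV"
      proof
        fix y assume "y \<in> T"
        hence "l ((2/eps) *\<^sub>R (y + - z)) < 1" "l ((-(2/eps)) *\<^sub>R (y + - z)) < 1"
          unfolding T_def using lK by auto
        moreover have "y + - z = y - z" by simp
        ultimately have d0: "l ((2/eps) *\<^sub>R (y - z)) < 1" "l ((-(2/eps)) *\<^sub>R (y - z)) < 1" by simp_all
        define D where "D = l y - l z"
        have "l ((2/eps) *\<^sub>R (y - z)) = (2/eps) * D" "l ((-(2/eps)) *\<^sub>R (y - z)) = (-(2/eps)) * D"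
          unfolding D_def by (simp_all only: linear_scale[OF l(1)] linear_diff[OF l(1)] real_scaleR_def)
        hence d: "(2/eps) * D < 1" "(-(2/eps)) * D < 1" using d0 by simp_all
        have "D < eps / 2" using d(1) eps(1) by (simp add: field_simps)
        moreover have "- D < eps / 2" using d(2) eps(1) by (simp add: field_simps)
        ultimately have "\<bar>l y - l z\<bar> < eps / 2" unfolding D_def by linarith
        hence "dist (l z) (l y) < eps" using eps(1) by (simp add: dist_real_def abs_minus_commute)
        hence "l y \<in> ball (l z) eps" by simp
        thus "y \<in> l -` B \<inter> UNIV" using eps(2) by auto
      qed
      ultimately show "\<exists>T. open T \<and> z \<in> T \<and> T \<subseteq> l -` B \<inter> UNIV" by blast
    qed
  qed
  obtain r where r: "r > 0" "r *\<^sub>R e \<in> W"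
  proof -
    have "open {r::real. r *\<^sub>R e \<in> W}" using open_ray_vimage[OF lc Wo] .
    moreover have "0 \<in> {r::real. r *\<^sub>R e \<in> W}" using W0 by simp
    ultimately obtain eps where eps: "eps > 0" "ball 0 eps \<subseteq> {r::real. r *\<^sub>R e \<in> W}"
      using open_contains_ball_eq by blast
    moreover have "eps / 2 \<in> ball (0::real) eps" using eps by simp
    ultimately have "eps / 2 \<in> {r::real. r *\<^sub>R e \<in> W}" by blast
    thus ?thesis using that[of "eps / 2"] eps by simp
  qed
  have "\<forall>a\<in>A. l a + r * l e \<le> l b"
  proof
    fix a assume "a \<in> A"
    hence "a - a0 + r *\<^sub>R e \<in> K" unfolding K_def using r by blast
    hence "l (a - a0 + r *\<^sub>R e) < 1" by (rule lK)
    hence "l a - l a0 + r * l e < 1" using l(1) by (simp add: linear_add linear_diff linear_scale)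
    moreover have "l e = l b - l a0" unfolding e_def using l(1) by (simp add: linear_diff)
    ultimately show "l a + r * l e \<le> l b" using le by linarith
  qed
  moreover have "r * l e > 0" using r le by simp
  ultimately show ?thesis using l(1) cont by blast
qed

end




lemma ereal_lt_ex: "(x::ereal) < \<infinity> \<Longrightarrow> \<exists>b. x < ereal b"
  by (cases x) (auto intro: exI[of _ "real_of_ereal x + 1"])

lemma core_mono:
  fixes H :: "real \<Rightarrow> ereal"
  assumes conv: "\<And>a b lam al be. 0 < lam \<Longrightarrow> lam < 1 \<Longrightarrow> H a < ereal al \<Longrightarrow> H b < ereal be \<Longrightarrow>
                   H (lam * a + (1 - lam) * b) < ereal (lam * al + (1 - lam) * be)"
    and H0: "H 0 < \<infinity>" and s: "0 < s" "s < 1"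
    and M: "\<And>h eps. H s = ereal h \<Longrightarrow> eps > 0 \<Longrightarrow> \<exists>r>0. H ((1 - r) * s) \<le> ereal (h + r * eps)"
  shows "H s \<le> H 1"
proof (rule ccontr)
  assume "\<not> H s \<le> H 1"
  hence lt: "H 1 < H s" by simp
  hence H1: "H 1 < \<infinity>" by (metis ereal_less_PInfty less_PInf_Ex_of_nat less_trans)
  obtain a0 where a0: "H 0 < ereal a0" using ereal_lt_ex[OF H0] by blast
  obtain b1 where b1: "H 1 < ereal b1" using ereal_lt_ex[OF H1] by blast
  have "H ((1 - s) * 0 + (1 - (1 - s)) * 1) < ereal ((1 - s) * a0 + (1 - (1 - s)) * b1)"
    by (rule conv) (use s a0 b1 in auto)
  hence "H s < ereal ((1 - s) * a0 + (1 - (1 - s)) * b1)" by simp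
  hence "H s < \<infinity>" by (rule less_trans) simp
  moreover have "H s \<noteq> -\<infinity>" using lt by auto
  ultimately obtain h where h: "H s = ereal h" by (cases "H s") auto
  show False
  proof (cases "H 1")
    case MInf
    obtain r where r: "r > 0" "H ((1 - r) * s) \<le> ereal (h + r * 1)" using M[OF h, of 1] by auto
    define lam where "lam = (1 - s) / (1 - s + r * s)"
    have den: "1 - s + r * s > 0" using s r by (smt (verit) mult_pos_pos)
    have lam: "0 < lam" "lam < 1" unfolding lam_def using s r den by (auto simp: field_simps)
    have l1: "lam * (1 - s + r * s) = 1 - s" unfolding lam_def using den by simp
    have "lam * ((1 - r) * s) + (1 - lam) * 1 = 1 - lam * (1 - s + r * s)" by (simp add: algebra_simps)
    hence pt: "lam * ((1 - r) * s) + (1 - lam) * 1 = s" using l1 by simp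
    define al where "al = h + r + 1"
    define be where "be = (h - 1 - lam * al) / (1 - lam)"
    have "H (lam * ((1 - r) * s) + (1 - lam) * 1) < ereal (lam * al + (1 - lam) * be)"
      by (rule conv) (use lam MInf al_def le_less_trans[OF r(2)] in auto)
    moreover have "lam * al + (1 - lam) * be = h - 1" unfolding be_def using lam by (simp add: field_simps)
    ultimately show False using pt h by simp
  next
    case PInf thus False using H1 by simp
  next
    case (real h1)
    have hh: "h1 < h" using lt h real by simp
    define eps where "eps = s * (h - h1) / (2 * (1 - s))"
    have eps: "eps > 0" unfolding eps_def using s hh by simp
    obtain r where r: "r > 0" "H ((1 - r) * s) \<le> ereal (h + r * eps)" using M[OF h eps] by auto
    define lam where "lam = (1 - s) / (1 - s + r * s)"
    have den: "1 - s + r * s > 0" using s r by (smt (verit) mult_pos_pos)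
    have lam: "0 < lam" "lam < 1" unfolding lam_def using s r den by (auto simp: field_simps)
    have l1: "lam * (1 - s + r * s) = 1 - s" unfolding lam_def using den by simp
    have "lam * ((1 - r) * s) + (1 - lam) * 1 = 1 - lam * (1 - s + r * s)" by (simp add: algebra_simps)
    hence pt: "lam * ((1 - r) * s) + (1 - lam) * 1 = s" using l1 by simp
    define d where "d = r * s * (h - h1) / (2 * (1 - s + r * s))"
    have d: "d > 0" unfolding d_def using r s hh den by simp
    have Hlt: "H (lam * ((1 - r) * s) + (1 - lam) * 1) < ereal (lam * (h + r * eps + d) + (1 - lam) * (h1 + d))"
      by (rule conv) (use lam d real le_less_trans[OF r(2)] in auto)
    define L where "L = 1 - s + r * s"
    have L: "L > 0" using den L_def by simp
    have om: "1 - lam = r * s / L" unfolding lam_def L_def[symmetric] using L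
      by (simp add: field_simps L_def)
    have le: "lam * (r * eps) = r * s * (h - h1) / (2 * L)" unfolding lam_def eps_def L_def[symmetric]
      using L s by (simp add: field_simps)
    have dL: "d = r * s * (h - h1) / (2 * L)" unfolding d_def L_def ..
    have "lam * (h + r * eps + d) + (1 - lam) * (h1 + d) = h - (1 - lam) * (h - h1) + lam * (r * eps) + d"
      by (simp add: algebra_simps)
    also have "\<dots> = h - r * s * (h - h1) / L + r * s * (h - h1) / (2 * L) + r * s * (h - h1) / (2 * L)"
      unfolding om le dL by simp
    also have "\<dots> = h" using L by (simp add: field_simps)
    finally have "lam * (h + r * eps + d) + (1 - lam) * (h1 + d) = h" .
    moreover
    ultimately show False using Hlt pt h by simp
  qed
qed




lemma scal_sub:
  fixes A B C :: "'z::{real_vector, t2_space} set"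
  assumes lc: "lc_tvs TYPE('z)" and Cneg: "\<exists>zs\<in>neg_dual_cone C. zs \<noteq> (\<lambda>_. 0)"
    and cone: "cone C" and A: "closed A" "convex A" "setplus A C \<subseteq> A"
    and H: "\<And>zs. zs \<in> neg_dual_cone C - {\<lambda>_. 0} \<Longrightarrow>
              Inf ((\<lambda>z. ereal (- zs z)) ` A) \<le> Inf ((\<lambda>z. ereal (- zs z)) ` B)"
  shows "B \<subseteq> A"
proof
  fix b assume bB: "b \<in> B"
  show "b \<in> A"
  proof (rule ccontr)
    assume bA: "b \<notin> A"
    show False
    proof (cases "A = {}")
      case True
      obtain zs where zs: "zs \<in> neg_dual_cone C" "zs \<noteq> (\<lambda>_. 0)" using Cneg by blast
      have "Inf ((\<lambda>z. ereal (- zs z)) ` A) = \<infinity>" using True by (simp add: top_ereal_def)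
      moreover have "Inf ((\<lambda>z. ereal (- zs z)) ` B) \<le> ereal (- zs b)" using bB by (rule INF_lower)
      ultimately show False using H[of zs] zs by simp
    next
      case False
      then obtain a0 where a0: "a0 \<in> A" by blast
      obtain l :: "'z \<Rightarrow> real" and d where l: "linear l" "continuous_on UNIV l" "d > 0"
          "\<And>a. a \<in> A \<Longrightarrow> l a + d \<le> l b"
        using separation[OF lc A(1,2) a0 bA] by blast
      have lC: "l c \<le> 0" if c: "c \<in> C" for c
      proof (rule ccontr)
        assume "\<not> l c \<le> 0"
        hence lc0: "l c > 0" by simp
        define t where "t = \<bar>(l b - l a0) / l c\<bar> + 1"
        have t0: "t \<ge> 0" unfolding t_def by simp
        have "t *\<^sub>R c \<in> C" using cone c t0 unfolding cone_def by blast
        hence "a0 + t *\<^sub>R c \<in> setplus A C" unfolding setplus_def using a0 by blast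
        hence "a0 + t *\<^sub>R c \<in> A" using A(3) by blast
        hence "l (a0 + t *\<^sub>R c) + d \<le> l b" by (rule l(4))
        hence "l a0 + t * l c + d \<le> l b" using l(1) by (simp add: linear_add linear_scale)
        moreover have "(l b - l a0) / l c < t" unfolding t_def by linarith
        hence "l b - l a0 < t * l c" using lc0 by (simp add: divide_less_eq)
        ultimately show False using l(3) by linarith
      qed
      have lN: "l \<in> neg_dual_cone C" unfolding neg_dual_cone_def top_dual_def using l lC by blast
      have lnz: "l \<noteq> (\<lambda>_. 0)"
      proof
        assume "l = (\<lambda>_. 0)"
        thus False using l(3) l(4)[OF a0] by simp
      qed
      have "ereal (- l b + d) \<le> Inf ((\<lambda>z. ereal (- l z)) ` A)"
        by (rule INF_greatest) (use l(4) in force)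
      also have "\<dots> \<le> Inf ((\<lambda>z. ereal (- l z)) ` B)" using H[of l] lN lnz by blast
      also have "\<dots> \<le> ereal (- l b)" using bB by (rule INF_lower)
      finally show False using l(3) by simp
    qed
  qed
qed

lemma M_set:
  fixes f :: "'x::real_vector \<Rightarrow> 'z::{real_vector, t2_space} set"
  assumes zs: "linear zs" "continuous_on UNIV zs"
    and D: "0 \<in> dderiv_G f y u" and h: "scal f zs y = ereal h" and eps: "eps > 0"
  shows "\<exists>r>0. scal f zs (y + r *\<^sub>R u) \<le> ereal (h + r * eps)"
proof (rule ccontr)
  assume nc: "\<not> ?thesis"
  have big: "ereal (h + r * eps) < scal f zs (y + r *\<^sub>R u)" if "r > 0" for r
    using nc that by (meson not_le)
  define S where "S = (\<Union>t\<in>{0<..<1::real}. scaleG (1/t) (ominusG (f (y + t *\<^sub>R u)) (f y)))"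
  have z0: "0 \<in> closure (convex hull S)" using D unfolding dderiv_G_def S_def by (rule INT_D) simp
  have Ssub: "S \<subseteq> {q. zs q \<le> - eps}"
  proof
    fix q assume "q \<in> S"
    then obtain t w where t: "0 < t" "t < 1" and w: "w \<in> ominusG (f (y + t *\<^sub>R u)) (f y)"
      and q: "q = (1/t) *\<^sub>R w" unfolding S_def scaleG_def by auto
    show "q \<in> {q. zs q \<le> - eps}"
    proof (rule ccontr)
      assume "q \<notin> {q. zs q \<le> - eps}"
      hence zq: "zs q > - eps" by simp
      have "w = t *\<^sub>R q" using q t by simp
      hence zw: "zs w = t * zs q" using zs(1) by (simp add: linear_scale)
      define del where "del = t * eps + zs w"
      have "del = t * (eps + zs q)" unfolding del_def zw by (simp add: distrib_left)
      moreover have "eps + zs q > 0" using zq by simp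
      ultimately have del: "del > 0" using t by simp
      have "scal f zs y < ereal (h + del)" using h del by simp
      then obtain a where a: "a \<in> f y" "ereal (- zs a) < ereal (h + del)"
        unfolding scal_def INF_less_iff by blast
      have "a + w \<in> f (y + t *\<^sub>R u)" using w a(1) unfolding ominusG_def setplus_def by auto
      hence "scal f zs (y + t *\<^sub>R u) \<le> ereal (- zs (a + w))" unfolding scal_def by (rule INF_lower)
      also have "- zs (a + w) = - zs a - zs w" using zs(1) by (simp add: linear_add)
      finally have "scal f zs (y + t *\<^sub>R u) \<le> ereal (- zs a - zs w)" .
      moreover have "- zs a - zs w < h + t * eps" using a(2) unfolding del_def by simp
      hence "ereal (- zs a - zs w) < ereal (h + t * eps)" by simp
      ultimately have "scal f zs (y + t *\<^sub>R u) < ereal (h + t * eps)"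
        by (rule le_less_trans)
      thus False using big[OF t(1)] by simp
    qed
  qed
  have cl: "closed {q. zs q \<le> - eps}"
    using closed_Collect_le[OF zs(2) continuous_on_const] by simp
  have cv: "convex {q. zs q \<le> - eps}" unfolding convex_def
  proof (intro ballI allI impI)
    fix a b and p v :: real assume ab: "a \<in> {q. zs q \<le> - eps}" "b \<in> {q. zs q \<le> - eps}"
      and pv: "0 \<le> p" "0 \<le> v" "p + v = 1"
    have "p * zs a \<le> p * (- eps)" using ab pv by (intro mult_left_mono) auto
    moreover have "v * zs b \<le> v * (- eps)" using ab pv by (intro mult_left_mono) auto
    ultimately have "p * zs a + v * zs b \<le> (p + v) * (- eps)" by (simp add: distrib_right)
    thus "p *\<^sub>R a + v *\<^sub>R b \<in> {q. zs q \<le> - eps}" using pv zs(1) by (simp add: linear_add linear_scale)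
  qed
  have "convex hull S \<subseteq> {q. zs q \<le> - eps}" using Ssub cv by (rule hull_minimal)
  hence "closure (convex hull S) \<subseteq> {q. zs q \<le> - eps}" using cl by (rule closure_minimal)
  hence "0 \<in> {q. zs q \<le> - eps}" using z0 by blast
  thus False using eps zs(1) by (simp add: linear_0)
qed

lemma M_scal:
  assumes D: "scal_dderiv f zs y u \<le> 0" and h: "scal f zs y = ereal h" and eps: "eps > 0"
  shows "\<exists>r>0. scal f zs (y + r *\<^sub>R u) \<le> ereal (h + r * eps)"
proof -
  have "(0::ereal) < ereal eps" using eps by simp
  hence "scal_dderiv f zs y u < ereal eps" using D by (rule le_less_trans[rotated])
  then obtain t where t: "t > 0"
    and lt: "ereal (1 / t) * iminus (scal f zs (y + t *\<^sub>R u)) (scal f zs y) < ereal eps"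
    unfolding scal_dderiv_def Inf_less_iff by blast
  define a where "a = scal f zs (y + t *\<^sub>R u)"
  define I where "I = iminus a (ereal h)"
  have lt2: "ereal (1 / t) * I < ereal eps" using lt h unfolding I_def a_def by simp
  have "I < ereal (t * eps)"
  proof (cases I)
    case (real i)
    hence "i / t < eps" using lt2 by simp
    hence "i < t * eps" using t by (simp add: divide_less_eq mult.commute)
    thus ?thesis using real by simp
  next
    case PInf thus ?thesis using lt2 t by simp
  next
    case MInf thus ?thesis by simp
  qed
  then obtain tau where tau: "a \<le> iplus (ereal h) (ereal tau)" "ereal tau < ereal (t * eps)"
    unfolding I_def iminus_def Inf_less_iff by blast
  have "a \<le> ereal (h + tau)" using tau(1) unfolding iplus_def by simp
  also have "\<dots> \<le> ereal (h + t * eps)" using tau(2) by simp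
  finally show ?thesis using t unfolding a_def by blast
qed

lemma scal_conv:
  fixes f :: "'x::real_vector \<Rightarrow> 'z::{real_vector, t2_space} set"
  assumes fconv: "convex_G_fun f" and zs: "linear zs" and lam: "0 < lam" "lam < 1"
    and y1: "scal f zs y1 < ereal al" and y2: "scal f zs y2 < ereal be"
  shows "scal f zs (lam *\<^sub>R y1 + (1 - lam) *\<^sub>R y2) < ereal (lam * al + (1 - lam) * be)"
proof -
  obtain z1 where z1: "z1 \<in> f y1" "- zs z1 < al" using y1 unfolding scal_def INF_less_iff by auto
  obtain z2 where z2: "z2 \<in> f y2" "- zs z2 < be" using y2 unfolding scal_def INF_less_iff by auto
  have "lam *\<^sub>R z1 + (1 - lam) *\<^sub>R z2 \<in> setplus (scaleG lam (f y1)) (scaleG (1 - lam) (f y2))"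
    unfolding setplus_def scaleG_def using z1 z2 by blast
  hence "lam *\<^sub>R z1 + (1 - lam) *\<^sub>R z2 \<in> oplusG (scaleG lam (f y1)) (scaleG (1 - lam) (f y2))"
    unfolding oplusG_def using closure_subset by blast
  hence mem: "lam *\<^sub>R z1 + (1 - lam) *\<^sub>R z2 \<in> f (lam *\<^sub>R y1 + (1 - lam) *\<^sub>R y2)"
    using fconv lam unfolding convex_G_fun_def by blast
  have "scal f zs (lam *\<^sub>R y1 + (1 - lam) *\<^sub>R y2) \<le> ereal (- zs (lam *\<^sub>R z1 + (1 - lam) *\<^sub>R z2))"
    unfolding scal_def using mem by (rule INF_lower)
  also have "- zs (lam *\<^sub>R z1 + (1 - lam) *\<^sub>R z2) = lam * (- zs z1) + (1 - lam) * (- zs z2)"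
    using zs by (simp add: linear_add linear_scale)
  also have "lam * (- zs z1) + (1 - lam) * (- zs z2) < lam * al + (1 - lam) * be"
    using lam z1 z2 by (intro add_strict_mono mult_strict_left_mono) auto
  finally show ?thesis by simp
qed

lemma seg_mono:
  fixes f :: "'x::real_vector \<Rightarrow> 'z::{real_vector, t2_space} set"
  assumes fconv: "convex_G_fun f" and zs: "linear zs" and H0: "scal f zs x0 < \<infinity>"
    and s: "0 < s" "s < 1"
    and M: "\<And>h eps. scal f zs (x0 + s *\<^sub>R (x - x0)) = ereal h \<Longrightarrow> eps > 0 \<Longrightarrow>
       \<exists>r>0. scal f zs ((x0 + s *\<^sub>R (x - x0)) + r *\<^sub>R (x0 - (x0 + s *\<^sub>R (x - x0)))) \<le> ereal (h + r * eps)"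
  shows "scal f zs (x0 + s *\<^sub>R (x - x0)) \<le> scal f zs x"
proof -
  define H where "H t = scal f zs (x0 + t *\<^sub>R (x - x0))" for t
  have pt: "x0 + (lam * a + (1 - lam) * b) *\<^sub>R (x - x0)
      = lam *\<^sub>R (x0 + a *\<^sub>R (x - x0)) + (1 - lam) *\<^sub>R (x0 + b *\<^sub>R (x - x0))" for lam a b
    by (simp add: algebra_simps)
  have pt2: "(x0 + s *\<^sub>R (x - x0)) + r *\<^sub>R (x0 - (x0 + s *\<^sub>R (x - x0))) = x0 + ((1 - r) * s) *\<^sub>R (x - x0)" for r
    by (simp add: algebra_simps)
  have "H s \<le> H 1"
  proof (rule core_mono)
    fix a b lam al be :: real
    assume "0 < lam" "lam < 1" "H a < ereal al" "H b < ereal be"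
    thus "H (lam * a + (1 - lam) * b) < ereal (lam * al + (1 - lam) * be)"
      unfolding H_def pt by (intro scal_conv[OF fconv zs])
  next
    show "H 0 < \<infinity>" using H0 unfolding H_def by simp
  next
    fix h eps :: real assume "H s = ereal h" "eps > 0"
    thus "\<exists>r>0. H ((1 - r) * s) \<le> ereal (h + r * eps)" using M unfolding H_def pt2 by blast
  qed (use s in auto)
  thus ?thesis unfolding H_def by simp
qed


lemma sub_clhull: "(S::'a::{real_vector,topological_space} set) \<subseteq> closure (convex hull S)"
  using hull_subset closure_subset by (metis subset_trans)

theorem mainTheorem2:
  fixes f :: "'x::real_vector \<Rightarrow> 'z::{real_vector, t2_space} set"
    and C :: "'z set" and x0 :: 'x
  assumes Z: "lc_tvs TYPE('z)"
    and C: "closed C" "convex C" "cone C" "0 \<in> C"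
    and Cneg: "\<exists>zs\<in>neg_dual_cone C. zs \<noteq> (\<lambda>_. 0)"
    and fG: "\<forall>x. inG C (f x)"
    and fconv: "convex_G_fun f"
    and x0: "x0 \<in> dom_G f"
  shows "(f x0 = inf_G f \<longleftrightarrow>
            (\<forall>x. recc (f x0) \<subseteq> dderiv_G f x (x0 - x)) \<and>
            (\<forall>x. (\<Inter>t0\<in>{0<..<1}. closure (convex hull
                    (\<Union>t\<in>{0..<t0}. f (x0 + t *\<^sub>R (x - x0))))) \<subseteq> f x0))
       \<and> ((\<forall>x. \<forall>zs\<in>neg_dual_cone C - {\<lambda>_. 0}. scal_dderiv f zs x (x0 - x) \<le> 0) \<and>
          (\<forall>x. \<forall>zs\<in>neg_dual_cone C - {\<lambda>_. 0}.
              (let g = (\<lambda>t::real. if t \<in> {0..1} then scal f zs (x0 + t *\<^sub>R (x - x0)) else \<infinity>)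
               in g 0 \<le> Liminf (at 0) g))
          \<longrightarrow> f x0 = inf_G f)"
proof -
  have fx0: "f x0 \<noteq> {}" using x0 unfolding dom_G_def by simp
  have feq: "f y = closure (convex hull (setplus (f y) C))" for y using fG unfolding inG_def by blast
  have fcl: "closed (f y)" for y by (subst feq) simp
  have fcv: "convex (f y)" for y by (subst feq) (rule convex_closure_lc[OF Z convex_convex_hull])
  have fC: "setplus (f y) C \<subseteq> f y" for y
  proof -
    have "setplus (f y) C \<subseteq> closure (convex hull (setplus (f y) C))"
      using hull_subset closure_subset by (metis subset_trans)
    moreover have e: "closure (convex hull (setplus (f y) C)) = f y" using feq[of y] by (rule sym)
    ultimately show ?thesis by simp
  qed
  have infeq: "f x0 = inf_G f \<longleftrightarrow> (\<forall>x. f x \<subseteq> f x0)"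
  proof
    assume e: "f x0 = inf_G f"
    show "\<forall>x. f x \<subseteq> f x0"
    proof
      fix x
      have "f x \<subseteq> (\<Union>x. f x)" by blast
      also have "\<dots> \<subseteq> convex hull (\<Union>x. f x)" by (rule hull_subset)
      also have "\<dots> \<subseteq> inf_G f" unfolding inf_G_def by (rule closure_subset)
      finally show "f x \<subseteq> f x0" using e by simp
    qed
  next
    assume a: "\<forall>x. f x \<subseteq> f x0"
    have "convex hull (\<Union>x. f x) \<subseteq> f x0" using a fcv by (intro hull_minimal) auto
    hence "inf_G f \<subseteq> f x0" unfolding inf_G_def using fcl by (intro closure_minimal) auto
    moreover have "f x0 \<subseteq> inf_G f"
    proof -
      have "f x0 \<subseteq> (\<Union>x. f x)" by blast
      also have "\<dots> \<subseteq> convex hull (\<Union>x. f x)" by (rule hull_subset)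
      also have "\<dots> \<subseteq> inf_G f" unfolding inf_G_def by (rule closure_subset)
      finally show ?thesis .
    qed
    ultimately show "f x0 = inf_G f" by blast
  qed
  have scal0: "scal f zs x0 < \<infinity>" for zs
  proof -
    obtain a where "a \<in> f x0" using fx0 by blast
    hence "scal f zs x0 \<le> ereal (- zs a)" unfolding scal_def by (rule INF_lower)
    thus ?thesis by (rule le_less_trans) simp
  qed
  have zsI: "linear zs" "continuous_on UNIV zs" if "zs \<in> neg_dual_cone C" for zs
    using that unfolding neg_dual_cone_def top_dual_def by auto
  have fromscal: "f x \<subseteq> f y" if "\<And>zs. zs \<in> neg_dual_cone C - {\<lambda>_. 0} \<Longrightarrow> scal f zs y \<le> scal f zs x" for x y
    using scal_sub[OF Z Cneg C(3) fcl fcv fC, of y "f x"] that unfolding scal_def by blast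
  have pt1: "t *\<^sub>R x0 + (1 - t) *\<^sub>R x = x + t *\<^sub>R (x0 - x)" for t and x :: 'x
    by (simp add: algebra_simps)
  have P1: "f x0 = inf_G f \<longleftrightarrow>
            (\<forall>x. recc (f x0) \<subseteq> dderiv_G f x (x0 - x)) \<and>
            (\<forall>x. (\<Inter>t0\<in>{0<..<1}. closure (convex hull
                    (\<Union>t\<in>{0..<t0}. f (x0 + t *\<^sub>R (x - x0))))) \<subseteq> f x0)"
  proof
    assume L: "f x0 = inf_G f"
    hence sub: "\<And>x. f x \<subseteq> f x0" using infeq by blast
    have "recc (f x0) \<subseteq> dderiv_G f x (x0 - x)" for x
    proof
      fix z assume "z \<in> recc (f x0)"
      hence z: "setplus (f x0) {z} \<subseteq> f x0" unfolding recc_def using fx0 by simp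
      show "z \<in> dderiv_G f x (x0 - x)" unfolding dderiv_G_def
      proof (rule INT_I)
        fix t0 :: real assume "t0 \<in> {0<..}"
        hence t0: "t0 > 0" by simp
        define t where "t = min (t0 / 2) (1 / 2)"
        have t: "0 < t" "t < t0" "t < 1" unfolding t_def using t0 by auto
        have "t *\<^sub>R z \<in> ominusG (f (x + t *\<^sub>R (x0 - x))) (f x)"
          unfolding ominusG_def
        proof (rule CollectI, rule subsetI)
          fix w assume "w \<in> setplus (f x) {t *\<^sub>R z}"
          then obtain a where a: "a \<in> f x" "w = a + t *\<^sub>R z" unfolding setplus_def by blast
          have ax0: "a \<in> f x0" using sub a(1) by blast
          hence "a + z \<in> f x0" using z unfolding setplus_def by blast
          hence "t *\<^sub>R (a + z) + (1 - t) *\<^sub>R a \<in> setplus (scaleG t (f x0)) (scaleG (1 - t) (f x))"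
            unfolding setplus_def scaleG_def using a(1) by blast
          hence "t *\<^sub>R (a + z) + (1 - t) *\<^sub>R a \<in> oplusG (scaleG t (f x0)) (scaleG (1 - t) (f x))"
            unfolding oplusG_def using closure_subset by blast
          hence "t *\<^sub>R (a + z) + (1 - t) *\<^sub>R a \<in> f (t *\<^sub>R x0 + (1 - t) *\<^sub>R x)"
            using fconv t unfolding convex_G_fun_def by blast
          moreover have "t *\<^sub>R (a + z) + (1 - t) *\<^sub>R a = w" using a(2) by (simp add: algebra_simps)
          ultimately show "w \<in> f (x + t *\<^sub>R (x0 - x))" using pt1 by simp
        qed
        hence "(1 / t) *\<^sub>R (t *\<^sub>R z) \<in> scaleG (1 / t) (ominusG (f (x + t *\<^sub>R (x0 - x))) (f x))"
          unfolding scaleG_def by blast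
        hence "z \<in> scaleG (1 / t) (ominusG (f (x + t *\<^sub>R (x0 - x))) (f x))" using t by simp
        hence "z \<in> (\<Union>t\<in>{0<..<t0}. scaleG (1 / t) (ominusG (f (x + t *\<^sub>R (x0 - x))) (f x)))"
          by (rule UN_I[rotated]) (use t in simp)
        thus "z \<in> closure (convex hull (\<Union>t\<in>{0<..<t0}. scaleG (1 / t) (ominusG (f (x + t *\<^sub>R (x0 - x))) (f x))))"
          by (rule subsetD[OF sub_clhull])
      qed
    qed
    moreover have "(\<Inter>t0\<in>{0<..<1}. closure (convex hull
                    (\<Union>t\<in>{0..<t0}. f (x0 + t *\<^sub>R (x - x0))))) \<subseteq> f x0" for x
    proof -
      have "(\<Inter>t0\<in>{0<..<1}. closure (convex hull (\<Union>t\<in>{0..<t0}. f (x0 + t *\<^sub>R (x - x0)))))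
          \<subseteq> closure (convex hull (\<Union>t\<in>{0..<1/2}. f (x0 + t *\<^sub>R (x - x0))))"
        by (rule INT_lower) simp
      also have "\<dots> \<subseteq> f x0"
      proof (rule closure_minimal[OF _ fcl])
        show "convex hull (\<Union>t\<in>{0..<1/2}. f (x0 + t *\<^sub>R (x - x0))) \<subseteq> f x0"
          using sub fcv by (intro hull_minimal) auto
      qed
      finally show ?thesis .
    qed
    ultimately show "(\<forall>x. recc (f x0) \<subseteq> dderiv_G f x (x0 - x)) \<and>
            (\<forall>x. (\<Inter>t0\<in>{0<..<1}. closure (convex hull
                    (\<Union>t\<in>{0..<t0}. f (x0 + t *\<^sub>R (x - x0))))) \<subseteq> f x0)" by blast
  next
    assume R: "(\<forall>x. recc (f x0) \<subseteq> dderiv_G f x (x0 - x)) \<and>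
            (\<forall>x. (\<Inter>t0\<in>{0<..<1}. closure (convex hull
                    (\<Union>t\<in>{0..<t0}. f (x0 + t *\<^sub>R (x - x0))))) \<subseteq> f x0)"
    have r0: "0 \<in> recc (f x0)" unfolding recc_def setplus_def using fx0 by simp
    have D0: "0 \<in> dderiv_G f y (x0 - y)" for y using R r0 by blast
    show "f x0 = inf_G f" unfolding infeq
    proof
      fix x
      have segsub: "f x \<subseteq> f (x0 + s *\<^sub>R (x - x0))" if s: "0 < s" "s < 1" for s
      proof (rule fromscal)
        fix zs assume zs: "zs \<in> neg_dual_cone C - {\<lambda>_. 0}"
        show "scal f zs (x0 + s *\<^sub>R (x - x0)) \<le> scal f zs x"
        proof (rule seg_mono[OF fconv zsI(1) scal0 s])
          show "zs \<in> neg_dual_cone C" using zs by simp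
          fix h eps :: real assume "scal f zs (x0 + s *\<^sub>R (x - x0)) = ereal h" "eps > 0"
          thus "\<exists>r>0. scal f zs (x0 + s *\<^sub>R (x - x0) + r *\<^sub>R (x0 - (x0 + s *\<^sub>R (x - x0)))) \<le> ereal (h + r * eps)"
            using M_set[OF zsI D0] zs by blast
        qed
      qed
      have "f x \<subseteq> closure (convex hull (\<Union>t\<in>{0..<t0}. f (x0 + t *\<^sub>R (x - x0))))" if t0: "t0 \<in> {0<..<1}" for t0
      proof -
        have "f x \<subseteq> f (x0 + (t0/2) *\<^sub>R (x - x0))" using t0 by (intro segsub) auto
        also have "\<dots> \<subseteq> (\<Union>t\<in>{0..<t0}. f (x0 + t *\<^sub>R (x - x0)))"
          by (rule UN_upper) (use t0 in simp)
        also have "\<dots> \<subseteq> closure (convex hull (\<Union>t\<in>{0..<t0}. f (x0 + t *\<^sub>R (x - x0))))"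
          by (rule sub_clhull)
        finally show ?thesis .
      qed
      hence "f x \<subseteq> (\<Inter>t0\<in>{0<..<1}. closure (convex hull (\<Union>t\<in>{0..<t0}. f (x0 + t *\<^sub>R (x - x0)))))"
        by blast
      thus "f x \<subseteq> f x0" using R by blast
    qed
  qed
  have P2: "((\<forall>x. \<forall>zs\<in>neg_dual_cone C - {\<lambda>_. 0}. scal_dderiv f zs x (x0 - x) \<le> 0) \<and>
          (\<forall>x. \<forall>zs\<in>neg_dual_cone C - {\<lambda>_. 0}.
              (let g = (\<lambda>t::real. if t \<in> {0..1} then scal f zs (x0 + t *\<^sub>R (x - x0)) else \<infinity>)
               in g 0 \<le> Liminf (at 0) g))
          \<longrightarrow> f x0 = inf_G f)"
  proof
    assume R: "(\<forall>x. \<forall>zs\<in>neg_dual_cone C - {\<lambda>_. 0}. scal_dderiv f zs x (x0 - x) \<le> 0) \<and>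
          (\<forall>x. \<forall>zs\<in>neg_dual_cone C - {\<lambda>_. 0}.
              (let g = (\<lambda>t::real. if t \<in> {0..1} then scal f zs (x0 + t *\<^sub>R (x - x0)) else \<infinity>)
               in g 0 \<le> Liminf (at 0) g))"
    show "f x0 = inf_G f" unfolding infeq
    proof (intro allI fromscal)
      fix x zs assume zs: "zs \<in> neg_dual_cone C - {\<lambda>_. 0}"
      have seg: "scal f zs (x0 + s *\<^sub>R (x - x0)) \<le> scal f zs x" if s: "0 < s" "s < 1" for s
      proof (rule seg_mono[OF fconv zsI(1) scal0 s])
        show "zs \<in> neg_dual_cone C" using zs by simp
        fix h eps :: real assume "scal f zs (x0 + s *\<^sub>R (x - x0)) = ereal h" "eps > 0"
        thus "\<exists>r>0. scal f zs (x0 + s *\<^sub>R (x - x0) + r *\<^sub>R (x0 - (x0 + s *\<^sub>R (x - x0)))) \<le> ereal (h + r * eps)"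
          using M_scal R zs by blast
      qed
      define g where "g = (\<lambda>t::real. if t \<in> {0..1} then scal f zs (x0 + t *\<^sub>R (x - x0)) else \<infinity>)"
      have "g 0 \<le> Liminf (at 0) g" using R zs unfolding g_def Let_def by blast
      also have "Liminf (at 0) g \<le> scal f zs x"
      proof (rule Liminf_least)
        fix P assume "eventually P (at (0::real))"
        then obtain d where d: "d > 0" "\<And>y. y \<noteq> 0 \<Longrightarrow> dist y 0 < d \<Longrightarrow> P y"
          unfolding eventually_at by auto
        define t where "t = min (d / 2) (1 / 2)"
        have t: "0 < t" "t < 1" "t < d" unfolding t_def using d by auto
        have "P t" using d(2)[of t] t by simp
        hence "Inf (g ` Collect P) \<le> g t" by (intro INF_lower) simp
        also have "g t = scal f zs (x0 + t *\<^sub>R (x - x0))" unfolding g_def using t by simp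
        also have "\<dots> \<le> scal f zs x" using seg t by simp
        finally show "Inf (g ` Collect P) \<le> scal f zs x" .
      qed
      finally show "scal f zs x0 \<le> scal f zs x" unfolding g_def by simp
    qed
  qed
  show ?thesis using P1 P2 by blast
qed


end
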